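(* In the following setting: $n$ training samples with labels in $\{1,\dots,K\}$, indicator matrix $F\in\mathbb{R}^{K\times n}$, with the same number of samples in every class; basis $G_1,\dots,G_r$ ($r\le n$) a subset of the training samples with the same number ($\ge1$) of basis vectors in every class; $F_{G_i}$ the class indicator of $G_i$; $\tilde W\in\mathbb{R}^{r\times n}$ entrywise nonnegative, columns summing to one, full row rank, with $\tilde W_{ij}=0$ whenever $F_{G_i}\neq F_j$; $\tilde W'=\tilde W+\Delta W$ with $\Delta W\in\mathbb{R}^{r\times n}$; $\xi=\|\tilde W^\dagger\|_2\|\Delta W\|_2$, $\delta=\|\Delta W\|_F/\|\tilde W\|_F$; $X=F\tilde W^\dagger$, $X'=F\tilde W'^\dagger$, $\gamma=\|X\|_F^2\|\tilde W\|_F^2/\|X\tilde W\|_F^2$, $\epsilon'=\|F-X'\tilde W'\|_F^2/\|X'\tilde W'\|_F^2+1$, $\gamma'=\|X'\|_F^2\|\tilde W'\|_F^2/\|X'\tilde W'\|_F^2$. If $\xi<1$, then $$\epsilon'\le\frac{\xi^2}{(1-\xi)^2}+1,\qquad \gamma'\le\gamma(1+\delta)^2\Big(1+\frac{2\xi}{1-\xi}\Big)^2\le\gamma\frac{(1+\xi)^4}{(1-\xi)^2}.$$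
   Context: The columns of $F$ are standard basis vectors of $\mathbb{R}^K$: $F_j=e_k$ iff sample $j$ is in class $k$. $\|\cdot\|_2$ of a matrix is the spectral norm; $M^\dagger$ is the Moore–Penrose pseudo-inverse. *)

theory Defs
  imports "HOL-Analysis.Analysis"
begin

text \<open>Matrices are elements of real^'c^'r (rows indexed by 'r, columns by 'c).\<close>

definition frob_norm :: "real^'c^'r \<Rightarrow> real" where
  "frob_norm A = sqrt (\<Sum>i\<in>UNIV. \<Sum>j\<in>UNIV. (A $ i $ j)^2)"

definition spec_norm :: "real^'c^'r \<Rightarrow> real" where
  "spec_norm A = onorm (\<lambda>x. A *v x)"

definition pinv :: "real^'c^'r \<Rightarrow> real^'r^'c" where
  "pinv A = (THE X. A ** X ** A = A \<and> X ** A ** X = X \<and>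
                    transpose (A ** X) = A ** X \<and> transpose (X ** A) = X ** A)"

definition indicator_mat :: "('n \<Rightarrow> 'k) \<Rightarrow> real^'n^'k" where
  "indicator_mat label = (\<chi> k j. if label j = k then 1 else 0)"

end

theory Submission
  imports Defs
begin


lemma mm_diff_l: "(A - B) ** (C::real^'c^'b) = A ** C - B ** (C::real^'c^'b)" for A B :: "real^'b^'a"
  by (vector matrix_matrix_mult_def sum_subtractf left_diff_distrib)
lemma mm_diff_r: "(A::real^'b^'a) ** (B - C) = A ** B - A ** C"
  by (vector matrix_matrix_mult_def sum_subtractf right_diff_distrib)
lemma mm_add_l: "(A + B) ** (C::real^'c^'b) = A ** C + B ** (C::real^'c^'b)" for A B :: "real^'b^'a"
  by (vector matrix_matrix_mult_def sum.distrib distrib_right)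
lemma transpose_add: "transpose (A + B) = transpose A + transpose (B::real^'b^'a)"
  by (simp add: transpose_def vec_eq_iff)

lemma frob_eq_norm: "frob_norm A = norm A"
  unfolding frob_norm_def norm_vec_def L2_set_def
  by (simp add: sum_nonneg)

lemma norm_sq_rows: "(norm (A::real^'n^'m))^2 = (\<Sum>i\<in>UNIV. (norm (A$i))^2)"
  unfolding norm_vec_def[of A] L2_set_def by (simp add: sum_nonneg)

lemma row_mm: "((A::real^'n^'m) ** B) $ i = transpose B *v (A $ i)"
  by (auto simp: vec_eq_iff matrix_matrix_mult_def matrix_vector_mult_def transpose_def intro!: sum.cong simp: mult.commute)

lemma row_axis: "(A::real^'n^'m) $ i = transpose A *v axis i 1"
  by (simp add: vec_eq_iff matrix_vector_mult_def transpose_def axis_def if_distrib if_distribR cong: if_cong)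

lemma spec_nonneg: "0 \<le> spec_norm (M::real^'n^'m)"
  unfolding spec_norm_def by (rule onorm_pos_le) simp

lemma spec_bound: "norm (M *v x) \<le> spec_norm M * norm x" for M :: "real^'n^'m"
  unfolding spec_norm_def using onorm[of "\<lambda>x. M *v x"] by simp

lemma spec_transpose: "norm (transpose M *v y) \<le> spec_norm M * norm y" for M :: "real^'n^'m"
proof -
  let ?z = "transpose M *v y"
  have "(norm ?z)^2 = inner ?z ?z" by (simp add: power2_norm_eq_inner)
  also have "\<dots> = inner y (M *v ?z)" by (simp add: dot_lmul_matrix)
  also have "\<dots> \<le> norm y * norm (M *v ?z)" by (rule norm_cauchy_schwarz)
  also have "\<dots> \<le> norm y * (spec_norm M * norm ?z)"
    by (rule mult_left_mono[OF spec_bound]) simp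
  finally have h: "(norm ?z)^2 \<le> spec_norm M * norm y * norm ?z" by (simp add: mult_ac)
  show ?thesis
  proof (cases "norm ?z = 0")
    case True then show ?thesis using spec_nonneg[of M] by simp
  next
    case False
    then have "norm ?z > 0" by simp
    with h show ?thesis by (simp add: power2_eq_square mult_le_cancel_right)
  qed
qed

lemma frob_spec: "norm (A ** B) \<le> norm A * spec_norm B" for A :: "real^'n^'m" and B :: "real^'p^'n"
proof -
  have "(norm (A ** B))^2 = (\<Sum>i\<in>UNIV. (norm ((A ** B)$i))^2)" by (rule norm_sq_rows)
  also have "\<dots> \<le> (\<Sum>i\<in>UNIV. (spec_norm B * norm (A$i))^2)"
    apply (rule sum_mono) apply (simp only: row_mm)
    apply (rule power_mono[OF spec_transpose]) by simp
  also have "\<dots> = (spec_norm B)^2 * (norm A)^2"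
    by (simp add: norm_sq_rows power_mult_distrib sum_distrib_left)
  also have "\<dots> = (norm A * spec_norm B)^2" by (simp add: power_mult_distrib)
  finally show ?thesis
    by (rule power2_le_imp_le) (simp add: spec_nonneg)
qed

lemma inner_mm: "inner (A ** M) B = inner A (B ** transpose M)" for A :: "real^'n^'m" and M :: "real^'p^'n"
  unfolding inner_vec_def[of "A ** M"] inner_vec_def[of A]
  by (simp add: row_mm dot_lmul_matrix)

lemma pythag_proj:
  fixes A :: "real^'n^'m" and P :: "real^'n^'n"
  assumes "transpose P = P" "P ** P = P"
  shows "(norm A)^2 = (norm (A ** P))^2 + (norm (A - A ** P))^2"
proof -
  have "inner (A ** P) (A - A ** P) = inner A ((A - A ** P) ** P)"
    using inner_mm[of A P "A - A ** P"] assms by simp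
  also have "\<dots> = 0" using assms by (simp add: mm_diff_l matrix_mul_assoc[symmetric])
  finally have "orthogonal (A ** P) (A - A ** P)" by (simp add: orthogonal_def)
  from norm_add_Pythagorean[OF this] show ?thesis by simp
qed

lemma pinv_props:
  fixes A :: "real^'c^'r"
  assumes inj: "inj ((*v) (transpose A))"
  shows "A ** pinv A = mat 1" "pinv A ** A ** pinv A = pinv A"
        "transpose (pinv A ** A) = pinv A ** A"
proof -
  define S where "S = A ** transpose A"
  have Ssym: "transpose S = S" by (simp add: S_def matrix_transpose_mul)
  have "inj ((*v) S)"
  proof (rule injI)
    fix x y assume "S *v x = S *v y"
    then have e: "S *v (x - y) = 0" by (simp add: matrix_vector_mult_diff_distrib)
    have "inner (transpose A *v (x - y)) (transpose A *v (x - y)) = inner (x - y) (S *v (x - y))"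
      by (simp add: S_def dot_lmul_matrix matrix_vector_mul_assoc[symmetric])
    also have "\<dots> = 0" using e by simp
    finally have "transpose A *v (x - y) = 0" by simp
    then have "transpose A *v x = transpose A *v y" by (simp add: matrix_vector_mult_diff_distrib)
    with inj show "x = y" unfolding inj_def by blast
  qed
  then obtain B where BS: "B ** S = mat 1" using matrix_left_invertible_injective by blast
  then have SB: "S ** B = mat 1" using matrix_left_right_inverse by blast
  have "transpose (B ** S) = mat 1" using BS by simp
  then have SBt: "S ** transpose B = mat 1" by (simp add: matrix_transpose_mul Ssym)
  have Bsym: "transpose B = B"
    by (metis BS SBt matrix_mul_assoc matrix_mul_lid matrix_mul_rid)
  define Y where "Y = transpose A ** B"
  have AY: "A ** Y = mat 1" by (simp add: Y_def matrix_mul_assoc S_def[symmetric] SB)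
  have P1: "A ** Y ** A = A" using AY by simp
  have P2: "Y ** A ** Y = Y" by (simp add: matrix_mul_assoc[symmetric] AY)
  have P3: "transpose (A ** Y) = A ** Y" using AY by simp
  have P4: "transpose (Y ** A) = Y ** A"
    by (simp add: Y_def matrix_transpose_mul Bsym matrix_mul_assoc)
  have uniq: "X = Y" if X1: "A ** X ** A = A" and X2: "X ** A ** X = X"
      and X4: "transpose (X ** A) = X ** A" for X
  proof -
    have "A ** X ** S = S" by (simp add: S_def matrix_mul_assoc X1)
    then have AX: "A ** X = mat 1" by (metis SB matrix_mul_assoc matrix_mul_rid)
    have "X = transpose (X ** A) ** X" using X2 X4 by simp
    also have "\<dots> = transpose A ** (transpose X ** X)" by (simp add: matrix_transpose_mul matrix_mul_assoc)
    finally have Xe: "X = transpose A ** (transpose X ** X)" .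
    have "mat 1 = S ** (transpose X ** X)" using AX Xe
      by (metis S_def matrix_mul_assoc)
    then have "B = transpose X ** X" by (metis BS matrix_mul_assoc matrix_mul_lid matrix_mul_rid)
    with Xe show "X = Y" by (simp add: Y_def)
  qed
  have "pinv A = Y"
    unfolding pinv_def
    apply (rule the_equality)
    using P1 P2 P3 P4 apply blast
    using uniq by blast
  then show "A ** pinv A = mat 1" "pinv A ** A ** pinv A = pinv A"
        "transpose (pinv A ** A) = pinv A ** A" using AY P2 P4 by simp_all
qed




lemma key_ineq:
  fixes s u v :: real
  assumes "0 \<le> s" "s < 1" "0 \<le> u" "0 \<le> v" "u^2 + v^2 \<le> s^2"
  shows "(1 - s + u)^2 \<le> (1 + s)^2 * (1 - v^2)"
proof -
  have us: "u \<le> s"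
  proof (rule power2_le_imp_le)
    show "u^2 \<le> s^2" using assms(5) by (smt (verit) zero_le_power2)
  qed (use assms in auto)
  have "(1+s)^2 * (1 - v^2) \<ge> (1+s)^2 * (1 - s^2 + u^2)"
    using assms by (intro mult_left_mono) auto
  moreover have "(1+s)^2 * (1 - s^2 + u^2) - (1 - s + u)^2 \<ge> 0"
  proof -
    have e1: "(1+s)^2 * (1 - s^2 + u^2) - (1 - s + u)^2
        = (1+s)^2 * (1-s^2) - (1-s)^2 + u^2 * ((1+s)^2-1) - 2 * u * (1-s)"
      by (simp add: power2_eq_square algebra_simps)
    have a1: "u^2 * ((1+s)^2-1) \<ge> 0" using one_le_power[of "1+s" 2] assms by (intro mult_nonneg_nonneg) auto
    have a2: "2 * u * (1-s) \<le> 2 * s * (1-s)" using us assms by (intro mult_right_mono) auto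
    have e2: "(1+s)^2 * (1-s^2) - (1-s)^2 - 2 * s * (1-s) = (1-s) * (1+s) * ((1+s)^2-1)"
      by (simp add: power2_eq_square algebra_simps)
    have a3: "(1-s) * (1+s) * ((1+s)^2-1) \<ge> 0" using one_le_power[of "1+s" 2] assms by (intro mult_nonneg_nonneg) auto
    show ?thesis using e1 a1 a2 e2 a3 by linarith
  qed
  ultimately show ?thesis by linarith
qed

lemma final_real:
  fixes nF nX nX' nW nW2 ndW p q \<eta> e \<xi> :: real
  assumes nF: "0<nF" and nX: "0<nX" and eta: "0<\<eta>" and e: "0\<le>e" and xi: "\<xi> = \<eta>*e" "\<xi><1"
    and nW: "0<nW" and nX': "0\<le>nX'" "nX' \<le> nX + p * (\<eta>/(1-\<xi>))" and p: "0\<le>p" and q: "0\<le>q"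
    and pq: "p^2+q^2 \<le> (nX * e)^2" and nXF: "nX \<le> nF * \<eta>"
    and nW2: "0\<le>nW2" "nW2 \<le> nW+ndW" and ndW: "0\<le>ndW" "ndW \<le> \<xi>*nW"
  shows "q^2/(nF^2-q^2) + 1 \<le> \<xi>^2/(1-\<xi>)^2+1
       \<and> nX'^2 * nW2^2/(nF^2-q^2) \<le> (nX^2 * nW^2/nF^2) * (1+ndW/nW)^2 * (1+2 * \<xi>/(1-\<xi>))^2
       \<and> (nX^2 * nW^2/nF^2) * (1+ndW/nW)^2 * (1+2 * \<xi>/(1-\<xi>))^2 \<le> (nX^2 * nW^2/nF^2) * (1+\<xi>)^4/(1-\<xi>)^2"
proof -
  define u where "u = p * \<eta>/nX"
  define v where "v = q * \<eta>/nX"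
  have xi0: "0 \<le> \<xi>" using xi eta e by simp
  have u0: "0 \<le> u" and v0: "0 \<le> v" using p q eta nX by (simp_all add: u_def v_def)
  have huv: "u^2 + v^2 \<le> \<xi>^2"
  proof -
    have "u^2 + v^2 = (p^2+q^2) * \<eta>^2 / nX^2" by (simp add: u_def v_def power_divide power_mult_distrib add_divide_distrib algebra_simps)
    also have "\<dots> \<le> (nX * e)^2 * \<eta>^2 / nX^2" using pq by (intro divide_right_mono mult_right_mono) auto
    also have "\<dots> = \<xi>^2" using nX xi by (simp add: power_mult_distrib)
    finally show ?thesis .
  qed
  have vxi: "v \<le> \<xi>"
  proof (rule power2_le_imp_le)
    show "v^2 \<le> \<xi>^2" using huv by (smt (verit) zero_le_power2)
  qed (use xi0 in auto)
  have v1: "v < 1" using vxi xi by simp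
  have hq: "q \<le> v * nF"
  proof -
    have "v * nF = q * (\<eta>*nF/nX)" by (simp add: v_def)
    moreover have "\<eta>*nF/nX \<ge> 1" using nXF nX by (simp add: mult.commute)
    ultimately show ?thesis using q by (metis mult_left_mono mult.right_neutral)
  qed
  have hq2: "q^2 \<le> v^2 * nF^2" using hq q by (metis power_mono power_mult_distrib)
  have Dlow: "nF^2 - q^2 \<ge> nF^2 * (1-v^2)" using hq2 by (simp add: algebra_simps)
  have v21: "v^2 < 1" using v0 v1 by (simp add: power_less_one_iff abs_less_iff)
  have "nF^2 * (1-v^2) > 0" using v21 nF by (intro mult_pos_pos) auto
  then have Dpos: "nF^2 - q^2 > 0" using Dlow by linarith
  have first: "q^2/(nF^2-q^2) \<le> \<xi>^2/(1-\<xi>)^2"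
  proof -
    have "v^2 \<le> \<xi>^2" using vxi v0 by (intro power_mono) auto
    then have "v^2 * nF^2 \<le> \<xi>^2 * nF^2" by (intro mult_right_mono) auto
    then have q2: "q^2 \<le> \<xi>^2 * nF^2" using hq2 by linarith
    have "(1-\<xi>)^2 + \<xi>^2 = 1 - 2 * \<xi>*(1-\<xi>)" by (simp add: power2_eq_square algebra_simps)
    moreover have "2 * \<xi>*(1-\<xi>) \<ge> 0" using xi0 xi by simp
    ultimately have "(1-\<xi>)^2 + \<xi>^2 \<le> 1" by linarith
    then have "q^2 * ((1-\<xi>)^2 + \<xi>^2) \<le> q^2" by (simp add: mult_left_le)
    with q2 have "q^2 * (1-\<xi>)^2 \<le> \<xi>^2 * (nF^2-q^2)" by (simp add: algebra_simps)
    then show ?thesis using Dpos xi by (simp add: divide_simps mult.commute)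
  qed
  have hX': "nX' \<le> nX * ((1-\<xi>+u)/(1-\<xi>))"
  proof -
    have "p * \<eta> = nX * u" using nX by (simp add: u_def)
    then have "p * (\<eta>/(1-\<xi>)) = nX * (u/(1-\<xi>))" by (metis times_divide_eq_right mult.assoc)
    moreover have "nX + nX * (u/(1-\<xi>)) = nX * ((1-\<xi>+u)/(1-\<xi>))" using xi by (simp add: field_simps)
    ultimately show ?thesis using nX'(2) by linarith
  qed
  have key: "(1-\<xi>+u)^2 \<le> (1+\<xi>)^2 * (1-v^2)" by (rule key_ineq) (use xi0 xi u0 v0 huv in auto)
  have nX'2: "nX'^2 \<le> nX^2 * ((1+\<xi>)^2 * (1-v^2)) / (1-\<xi>)^2"
  proof -
    have "nX'^2 \<le> (nX * ((1-\<xi>+u)/(1-\<xi>)))^2" using hX' nX'(1) by (rule power_mono)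
    also have "\<dots> = nX^2 * (1-\<xi>+u)^2 / (1-\<xi>)^2" by (simp add: power_mult_distrib power_divide)
    also have "\<dots> \<le> nX^2 * ((1+\<xi>)^2 * (1-v^2)) / (1-\<xi>)^2"
      using key by (intro divide_right_mono mult_left_mono) auto
    finally show ?thesis .
  qed
  have nW22: "nW2^2 \<le> nW^2 * (1+ndW/nW)^2"
  proof -
    have "nW + ndW = nW * (1+ndW/nW)" using nW by (simp add: field_simps)
    with nW2 have "nW2 \<le> nW * (1+ndW/nW)" by simp
    then have "nW2^2 \<le> (nW * (1+ndW/nW))^2" using nW2 by (intro power_mono) auto
    then show ?thesis by (simp add: power_mult_distrib)
  qed
  have c: "1+2 * \<xi>/(1-\<xi>) = (1+\<xi>)/(1-\<xi>)" using xi by (simp add: field_simps)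
  have second: "nX'^2 * nW2^2/(nF^2-q^2) \<le> (nX^2 * nW^2/nF^2) * (1+ndW/nW)^2 * (1+2 * \<xi>/(1-\<xi>))^2"
  proof -
    have "nX'^2 * nW2^2/(nF^2-q^2) \<le> (nX^2 * ((1+\<xi>)^2 * (1-v^2)) / (1-\<xi>)^2) * (nW^2 * (1+ndW/nW)^2) / (nF^2 * (1-v^2))"
    proof (rule frac_le)
      show "nX'^2 * nW2^2 \<le> (nX^2 * ((1+\<xi>)^2 * (1-v^2)) / (1-\<xi>)^2) * (nW^2 * (1+ndW/nW)^2)"
        by (rule mult_mono[OF nX'2 nW22]) (use v21 in \<open>auto intro!: mult_nonneg_nonneg divide_nonneg_nonneg\<close>)
      show "0 \<le> (nX^2 * ((1+\<xi>)^2 * (1-v^2)) / (1-\<xi>)^2) * (nW^2 * (1+ndW/nW)^2)"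
        using v21 by (intro mult_nonneg_nonneg divide_nonneg_nonneg) auto
      show "0 < nF^2 * (1-v^2)" using v21 nF by (intro mult_pos_pos) auto
      show "nF^2 * (1-v^2) \<le> nF^2-q^2" by (rule Dlow)
    qed
    also have "\<dots> = (nX^2 * nW^2/nF^2) * (1+ndW/nW)^2 * ((1+\<xi>)/(1-\<xi>))^2"
      using v21 nF xi by (simp add: field_simps power_divide)
    finally show ?thesis by (simp only: c)
  qed
  have third: "(nX^2 * nW^2/nF^2) * (1+ndW/nW)^2 * (1+2 * \<xi>/(1-\<xi>))^2 \<le> (nX^2 * nW^2/nF^2) * (1+\<xi>)^4/(1-\<xi>)^2"
  proof -
    have "ndW/nW \<le> \<xi>" using ndW nW by (simp add: divide_le_eq)
    then have "(1+ndW/nW)^2 \<le> (1+\<xi>)^2" using ndW nW by (intro power_mono) auto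
    then have "(nX^2 * nW^2/nF^2) * (1+ndW/nW)^2 * ((1+\<xi>)/(1-\<xi>))^2 \<le> (nX^2 * nW^2/nF^2) * (1+\<xi>)^2 * ((1+\<xi>)/(1-\<xi>))^2"
      by (intro mult_right_mono mult_left_mono) auto
    also have "\<dots> = (nX^2 * nW^2/nF^2) * (1+\<xi>)^4/(1-\<xi>)^2"
    proof -
      have c4: "(1+\<xi>)^2 * ((1+\<xi>)/(1-\<xi>))^2 = (1+\<xi>)^4/(1-\<xi>)^2"
        by (simp add: power_divide power_add[symmetric])
      show ?thesis by (metis c4 mult.assoc times_divide_eq_right)
    qed
    finally show ?thesis by (simp only: c)
  qed
  show ?thesis using first second third by (intro conjI add_right_mono)
qed

theorem corollary3:
  fixes label :: "'n::finite \<Rightarrow> 'k::finite"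
    and g :: "'r::finite \<Rightarrow> 'n"
    and W dW :: "real^'n^'r"
  assumes balanced_samples: "\<And>k k'. card {j. label j = k} = card {j. label j = k'}"
    and basis_subset: "inj g"
    and r_le_n: "CARD('r) \<le> CARD('n)"
    and balanced_basis: "\<And>k k'. card {i. label (g i) = k} = card {i. label (g i) = k'}"
    and basis_nonempty: "\<And>k. card {i. label (g i) = k} \<ge> 1"
    and W_nonneg: "\<And>i j. W $ i $ j \<ge> 0"
    and W_colsum: "\<And>j. (\<Sum>i\<in>UNIV. W $ i $ j) = 1"
    and W_rank: "rank W = CARD('r)"
    and W_support: "\<And>i j. label (g i) \<noteq> label j \<Longrightarrow> W $ i $ j = 0"
    and xi_lt: "spec_norm (pinv W) * spec_norm dW < 1"
  shows
    "let F = indicator_mat label;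
         W' = W + dW;
         \<xi> = spec_norm (pinv W) * spec_norm dW;
         \<delta> = frob_norm dW / frob_norm W;
         X = F ** pinv W;
         X' = F ** pinv W';
         \<gamma> = (frob_norm X)^2 * (frob_norm W)^2 / (frob_norm (X ** W))^2;
         \<epsilon>' = (frob_norm (F - X' ** W'))^2 / (frob_norm (X' ** W'))^2 + 1;
         \<gamma>' = (frob_norm X')^2 * (frob_norm W')^2 / (frob_norm (X' ** W'))^2
     in \<epsilon>' \<le> \<xi>^2 / (1 - \<xi>)^2 + 1
        \<and> \<gamma>' \<le> \<gamma> * (1 + \<delta>)^2 * (1 + 2 * \<xi> / (1 - \<xi>))^2
        \<and> \<gamma> * (1 + \<delta>)^2 * (1 + 2 * \<xi> / (1 - \<xi>))^2 \<le> \<gamma> * (1 + \<xi>)^4 / (1 - \<xi>)^2"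
proof -
  define F where "F = indicator_mat label"
  define FG :: "real^'r^'k" where "FG = (\<chi> k i. if label (g i) = k then 1 else 0)"
  have entry: "(FG ** W) $ k $ j = (if label j = k then 1 else 0)" for k j
  proof -
    have "(FG ** W) $ k $ j = (\<Sum>i\<in>UNIV. FG $ k $ i * W $ i $ j)"
      by (simp add: matrix_matrix_mult_def)
    also have "\<dots> = (\<Sum>i\<in>UNIV. (if label (g i) = k then W $ i $ j else 0))"
      by (rule sum.cong[OF refl]) (simp add: FG_def)
    also have "\<dots> = (if label j = k then 1 else 0)"
    proof (cases "label j = k")
      case True
      have "(\<Sum>i\<in>UNIV. (if label (g i) = k then W $ i $ j else 0)) = (\<Sum>i\<in>UNIV. W $ i $ j)"
      proof (rule sum.cong[OF refl])
        fix i show "(if label (g i) = k then W $ i $ j else 0) = W $ i $ j"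
          using W_support[of i j] True by (cases "label (g i) = k") auto
      qed
      then show ?thesis using W_colsum[of j] True by simp
    next
      case False
      have "(\<Sum>i\<in>UNIV. (if label (g i) = k then W $ i $ j else 0)) = 0"
      proof (rule sum.neutral, rule ballI)
        fix i show "(if label (g i) = k then W $ i $ j else 0) = 0"
          using W_support[of i j] False by (cases "label (g i) = k") auto
      qed
      then show ?thesis using False by simp
    qed
    finally show ?thesis .
  qed
  have FFG: "F = FG ** W"
    by (simp add: vec_eq_iff F_def indicator_mat_def entry)
  define Wp where "Wp = pinv W"
  have "rank (transpose W) = CARD('r)" using W_rank by (simp add: rank_transpose)
  then have injW: "inj ((*v) (transpose W))" by (simp add: full_rank_injective)
  have WWp: "W ** Wp = mat 1" using pinv_props(1)[OF injW] by (simp add: Wp_def)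
  define \<eta> where "\<eta> = spec_norm Wp"
  define e where "e = spec_norm dW"
  define \<xi> where "\<xi> = \<eta> * e"
  have xi1: "\<xi> < 1" using xi_lt by (simp add: \<xi>_def \<eta>_def e_def Wp_def)
  have e0: "0 \<le> e" by (simp add: e_def spec_nonneg)
  have eta0: "0 \<le> \<eta>" by (simp add: \<eta>_def spec_nonneg)
  have XFG: "F ** Wp = FG" using FFG WWp by (simp add: matrix_mul_assoc[symmetric])
  have lowW: "norm y \<le> \<eta> * norm (transpose W *v y)" for y
  proof -
    have "transpose Wp *v (transpose W *v y) = y"
      by (simp add: vector_matrix_mul_assoc WWp)
    then show ?thesis using spec_transpose[of Wp "transpose W *v y"] by (simp add: \<eta>_def)
  qed
  have eta_pos: "0 < \<eta>"
  proof -
    have "1 \<le> \<eta> * norm (transpose W *v axis undefined 1)" using lowW[of "axis undefined 1"] by simp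
    then have "\<eta> \<noteq> 0" by auto
    then show ?thesis using eta0 by simp
  qed
  have xi0: "0 \<le> \<xi>" using eta0 e0 by (simp add: \<xi>_def)
  define W2 where "W2 = W + dW"
  have lowW2: "(1-\<xi>) * norm y \<le> \<eta> * norm (transpose W2 *v y)" for y
  proof -
    have "transpose W2 *v y = transpose W *v y + transpose dW *v y"
      by (simp add: W2_def transpose_add matrix_vector_mult_add_rdistrib)
    then have "norm (transpose W *v y) \<le> norm (transpose W2 *v y) + norm (transpose dW *v y)"
      by (metis add_diff_cancel_right' norm_triangle_ineq4 order_trans norm_minus_commute add.commute norm_triangle_ineq2 diff_add_cancel)
    moreover have "norm (transpose dW *v y) \<le> e * norm y" using spec_transpose[of dW y] by (simp add: e_def)
    ultimately have "norm (transpose W *v y) \<le> norm (transpose W2 *v y) + e * norm y" by linarith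
    then have "\<eta> * norm (transpose W *v y) \<le> \<eta> * (norm (transpose W2 *v y) + e * norm y)"
      using eta0 by (intro mult_left_mono)
    then show ?thesis using lowW[of y] by (simp add: \<xi>_def algebra_simps)
  qed
  have injW2: "inj ((*v) (transpose W2))"
  proof (rule injI)
    fix x y assume "transpose W2 *v x = transpose W2 *v y"
    then have "transpose W2 *v (x - y) = 0" by (simp add: matrix_vector_mult_diff_distrib)
    then have "(1-\<xi>) * norm (x - y) \<le> 0" using lowW2[of "x - y"] by simp
    then have "norm (x - y) \<le> 0" using xi1 by (simp add: mult_le_0_iff)
    then show "x = y" by simp
  qed
  define Wq where "Wq = pinv W2"
  have W2Wq: "W2 ** Wq = mat 1" and WqW2Wq: "Wq ** W2 ** Wq = Wq" and Psym0: "transpose (Wq ** W2) = Wq ** W2"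
    using pinv_props[OF injW2] by (simp_all add: Wq_def)
  define P where "P = Wq ** W2"
  have Psym: "transpose P = P" using Psym0 by (simp add: P_def)
  have PP: "P ** P = P" by (simp add: P_def matrix_mul_assoc) (metis WqW2Wq matrix_mul_assoc)
  have PWq: "P ** Wq = Wq" using WqW2Wq by (simp add: P_def)
  have W2P: "W2 ** P = W2" by (simp add: P_def matrix_mul_assoc W2Wq)
  have specWq: "spec_norm Wq \<le> \<eta> / (1 - \<xi>)"
    unfolding spec_norm_def
  proof (rule onorm_le)
    fix z
    define x where "x = Wq *v z"
    define y where "y = transpose Wq *v x"
    have hx: "x = transpose W2 *v y"
    proof -
      have "Wq = transpose P ** Wq" using PWq Psym by simp
      also have "\<dots> = transpose W2 ** transpose Wq ** Wq" by (simp add: P_def matrix_transpose_mul)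
      finally have "Wq = transpose W2 ** transpose Wq ** Wq" .
      then have M: "transpose W2 ** transpose Wq ** Wq = Wq" by simp
      have "x = (transpose W2 ** transpose Wq ** Wq) *v z" by (simp only: x_def M)
      also have "\<dots> = transpose W2 *v (transpose Wq *v (Wq *v z))" by (simp only: matrix_vector_mul_assoc matrix_mul_assoc)
      finally show ?thesis by (simp only: y_def x_def)
    qed
    have "(norm x)^2 = inner x x" by (simp add: power2_norm_eq_inner)
    also have "\<dots> = inner (y v* W2) x" using hx by simp
    also have "\<dots> = inner y (W2 *v x)" by (rule dot_lmul_matrix)
    also have "W2 *v x = z" by (simp add: x_def matrix_vector_mul_assoc W2Wq)
    also have "inner y z \<le> norm y * norm z" by (rule norm_cauchy_schwarz)
    finally have h1: "(norm x)^2 \<le> norm y * norm z" .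
    have h2: "(1-\<xi>) * norm y \<le> \<eta> * norm x" using lowW2[of y] hx by simp
    have "(1-\<xi>) * (norm x)^2 \<le> (1-\<xi>) * (norm y * norm z)" using h1 xi1 by (intro mult_left_mono) auto
    also have "\<dots> = ((1-\<xi>) * norm y) * norm z" by simp
    also have "\<dots> \<le> (\<eta> * norm x) * norm z" using h2 by (intro mult_right_mono) auto
    finally have h3: "(1-\<xi>) * (norm x)^2 \<le> \<eta> * norm x * norm z" .
    show "norm (Wq *v z) \<le> \<eta> / (1 - \<xi>) * norm z"
    proof (cases "norm x = 0")
      case True then show ?thesis using eta0 xi1 by (simp add: x_def)
    next
      case False
      then have "norm x > 0" by simp
      have "((1-\<xi>) * norm x) * norm x \<le> (\<eta> * norm z) * norm x"
        using h3 by (simp add: power2_eq_square mult_ac)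
      then have h4: "(1-\<xi>) * norm x \<le> \<eta> * norm z"
        using \<open>norm x > 0\<close> by (simp only: mult_le_cancel_right_pos)
      have "norm x \<le> \<eta> * norm z / (1-\<xi>)"
        using h4 xi1 by (simp add: pos_le_divide_eq mult.commute)
      then show ?thesis by (simp add: x_def)
    qed
  qed
  define D where "D = FG ** dW"
  have eqF: "F - (F ** Wq) ** W2 = - (D - D ** P)"
  proof -
    have A: "(F ** Wq) ** W2 = F ** P" by (simp only: P_def matrix_mul_assoc)
    have F2: "F = FG ** W2 - D" using FFG by (simp add: W2_def D_def matrix_add_ldistrib)
    have F3: "F ** P = FG ** W2 - D ** P"
      by (subst F2) (simp add: mm_diff_l matrix_mul_assoc[symmetric] W2P)
    show ?thesis unfolding A F3 by (subst F2) (simp add: algebra_simps)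
  qed
  have eqX': "F ** Wq = FG - D ** P ** Wq"
  proof -
    have F2: "F = FG ** W2 - D" using FFG by (simp add: W2_def D_def matrix_add_ldistrib)
    then have "F ** Wq = FG ** (W2 ** Wq) - D ** Wq" by (simp add: mm_diff_l matrix_mul_assoc)
    then show ?thesis by (simp add: W2Wq matrix_mul_assoc[symmetric] PWq)
  qed
  define nF where "nF = norm F"
  define nX where "nX = norm FG"
  define nX' where "nX' = norm (F ** Wq)"
  define nW where "nW = norm W"
  define nW2 where "nW2 = norm W2"
  define ndW where "ndW = norm dW"
  define p where "p = norm (D ** P)"
  define q where "q = norm (D - D ** P)"
  have hnX': "nX' \<le> nX + p * (\<eta> / (1 - \<xi>))"
  proof -
    have "nX' \<le> nX + norm (D ** P ** Wq)" unfolding nX'_def nX_def eqX' by (rule norm_triangle_ineq4)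
    also have "norm (D ** P ** Wq) \<le> p * spec_norm Wq" unfolding p_def by (rule frob_spec)
    also have "\<dots> \<le> p * (\<eta> / (1 - \<xi>))" using specWq by (intro mult_left_mono) (auto simp: p_def)
    finally show ?thesis by simp
  qed
  have hpq: "p^2 + q^2 \<le> (nX * e)^2"
  proof -
    have "(norm D)^2 = p^2 + q^2" unfolding p_def q_def by (rule pythag_proj[OF Psym PP])
    moreover have "norm D \<le> nX * e" unfolding D_def nX_def e_def by (rule frob_spec)
    ultimately show ?thesis by (metis norm_ge_zero power_mono)
  qed
  have hnXF: "nX \<le> nF * \<eta>" unfolding nX_def nF_def \<eta>_def using frob_spec[of F Wp] XFG by simp
  have F_ne: "F \<noteq> 0"
  proof
    assume "F = 0"
    then have "F $ label undefined $ undefined = 0" by simp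
    then show False by (simp add: F_def indicator_mat_def)
  qed
  have nF0: "0 < nF" using F_ne by (simp add: nF_def)
  have nX0: "0 < nX" using F_ne FFG by (auto simp: nX_def)
  have Fq: "norm (F - (F ** Wq) ** W2) = q" unfolding eqF q_def by (rule norm_minus_cancel)
  have FP2: "(norm ((F ** Wq) ** W2))^2 = nF^2 - q^2"
  proof -
    have "nF^2 = (norm (F ** P))^2 + (norm (F - F ** P))^2" unfolding nF_def by (rule pythag_proj[OF Psym PP])
    moreover have "(F ** Wq) ** W2 = F ** P" by (simp add: P_def matrix_mul_assoc)
    ultimately show ?thesis using Fq by simp
  qed
  have hW2: "nW2 \<le> nW + ndW" unfolding nW2_def nW_def ndW_def W2_def by (rule norm_triangle_ineq)
  have rowbd: "ndW^2 \<le> (\<xi> * nW)^2"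
  proof -
    have "ndW^2 = (\<Sum>i\<in>UNIV. (norm (dW$i))^2)" unfolding ndW_def by (rule norm_sq_rows)
    also have "\<dots> \<le> (\<Sum>i\<in>(UNIV::'r set). e^2)"
    proof (rule sum_mono)
      fix i
      have "norm (dW$i) \<le> e" unfolding e_def by (metis row_axis spec_transpose norm_axis_1 mult.right_neutral)
      then show "(norm (dW$i))^2 \<le> e^2" by (intro power_mono) auto
    qed
    also have "\<dots> = \<xi>^2 * (\<Sum>i\<in>(UNIV::'r set). (1/\<eta>)^2)" using eta_pos by (simp add: \<xi>_def power_mult_distrib power_divide)
    also have "\<dots> \<le> \<xi>^2 * (\<Sum>i\<in>UNIV. (norm (W$i))^2)"
    proof (intro mult_left_mono sum_mono)
      fix i
      have "1 \<le> \<eta> * norm (W$i)" by (metis row_axis lowW norm_axis_1)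
      then have "1/\<eta> \<le> norm (W$i)" using eta_pos by (simp add: divide_le_eq mult.commute)
      then show "(1/\<eta>)^2 \<le> (norm (W$i))^2" using eta_pos by (intro power_mono) auto
    qed simp
    also have "\<dots> = (\<xi> * nW)^2" by (simp add: nW_def norm_sq_rows[symmetric] power_mult_distrib)
    finally show ?thesis .
  qed
  have hdW: "ndW \<le> \<xi> * nW"
    using rowbd by (rule power2_le_imp_le) (simp add: nW_def xi0)
  have nW0: "0 < nW"
  proof -
    have "1 \<le> \<eta> * norm (W$undefined)" by (metis row_axis lowW norm_axis_1)
    then have "W \<noteq> 0" by auto
    then show ?thesis by (simp add: nW_def)
  qed
  have R: "q^2/(nF^2-q^2) + 1 \<le> \<xi>^2/(1-\<xi>)^2+1
       \<and> nX'^2*nW2^2/(nF^2-q^2) \<le> (nX^2*nW^2/nF^2)*(1+ndW/nW)^2*(1+2*\<xi>/(1-\<xi>))^2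
       \<and> (nX^2*nW^2/nF^2)*(1+ndW/nW)^2*(1+2*\<xi>/(1-\<xi>))^2 \<le> (nX^2*nW^2/nF^2)*(1+\<xi>)^4/(1-\<xi>)^2"
    by (rule final_real[where p=p and e=e and \<eta>=\<eta>])
       (use nF0 nX0 eta_pos e0 xi1 nW0 hnX' hpq hnXF hW2 hdW in \<open>auto simp: \<xi>_def nX'_def p_def q_def nW2_def ndW_def\<close>)
  have XW: "FG ** W = F" using FFG by simp
  show ?thesis
    unfolding Let_def frob_eq_norm
    unfolding F_def[symmetric] Wp_def[symmetric] W2_def[symmetric] Wq_def[symmetric]
    unfolding XFG XW FP2 Fq
    unfolding \<eta>_def[symmetric] e_def[symmetric] \<xi>_def[symmetric]
      nF_def[symmetric] nX_def[symmetric] nX'_def[symmetric] nW_def[symmetric] nW2_def[symmetric] ndW_def[symmetric]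
    by (rule R)
qed

end
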